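(* Let $P$ be a finite poset and let $r$ be the length of the longest chains of $P$. The following are equivalent: (1) $\mathbb{E}(\mathrm{chain}(k);\mathrm{ddeg})=\mathbb{E}(\mathrm{uni};\mathrm{ddeg})$ for all $k=0,1,\ldots,r$; (2) $\mathbb{E}(\mathrm{mchain}(m);\mathrm{ddeg})=\mathbb{E}(\mathrm{uni};\mathrm{ddeg})$ for all $m\geq 0$; (3) $\mathbb{E}(\mathrm{mchain}(m);\mathrm{ddeg})=\mathbb{E}(\mathrm{uni};\mathrm{ddeg})$ for all $m=0,1,\ldots,r$; (4) $\mathbb{E}(\widehat{\mathrm{mchain}}(m);\mathrm{ddeg})=\mathbb{E}(\mathrm{uni};\mathrm{ddeg})$ for all $m\geq 0$; (5) $\mathbb{E}(\widehat{\mathrm{mchain}}(m);\mathrm{ddeg})=\mathbb{E}(\mathrm{uni};\mathrm{ddeg})$ for all $m=0,1,\ldots,r$.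
   Context: All posets are finite. For a probability distribution $\mu$ on $P$ and a function $f\colon P\to\mathbb{R}$, $\mathbb{E}(\mu;f)=\sum_{p\in P}f(p)\,\mathbb{P}(\mu;p)$. The down-degree $\mathrm{ddeg}(p)$ is the number of elements covered by $p$. $\mathrm{uni}$ is the uniform distribution on $P$. A $k$-chain is a sequence $c_0<c_1<\cdots<c_k$ of elements of $P$; an $m$-multichain is a sequence $c_0\le c_1\le\cdots\le c_m$; we write $p\in c$ if $p=c_i$ for some $i$. The $k$-chain distribution is $\mathbb{P}(\mathrm{chain}(k);p)=\#\{k\text{-chains } c: p\in c\}/\big((k+1)\cdot\#\{k\text{-chains}\}\big)$. The $m$-multichain distribution $\mathrm{mchain}(m)$ gives $p$ probability proportional to the number of $m$-multichains $c$ with $p\in c$ (normalized to total probability 1). The modified $m$-multichain distribution is $\mathbb{P}(\widehat{\mathrm{mchain}}(m);p)=\#\{(c,i): c\text{ an }m\text{-multichain},\ c_i=p\}/\big((m+1)\cdot\#\{m\text{-multichains}\}\big)$. *)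

theory Defs
  imports Complex_Main
begin

text \<open>A finite poset is modelled as a type of class finite and order (the whole type is the poset).\<close>

definition covers :: "'a::order \<Rightarrow> 'a \<Rightarrow> bool" where
  "covers q p \<longleftrightarrow> q < p \<and> \<not> (\<exists>z. q < z \<and> z < p)"

definition ddeg :: "'a::{finite,order} \<Rightarrow> nat" where
  "ddeg p = card {q. covers q p}"

definition chains :: "nat \<Rightarrow> ('a::order) list set" where
  "chains k = {c. length c = k + 1 \<and> sorted_wrt (<) c}"

definition mchains :: "nat \<Rightarrow> ('a::order) list set" where
  "mchains m = {c. length c = m + 1 \<and> sorted_wrt (\<le>) c}"

definition longest_chain_length :: "'a::{finite,order} itself \<Rightarrow> nat" where
  "longest_chain_length _ = Max {k. (chains k :: 'a list set) \<noteq> {}}"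

definition expect :: "('a::finite \<Rightarrow> real) \<Rightarrow> ('a \<Rightarrow> real) \<Rightarrow> real" where
  "expect prob f = (\<Sum>p\<in>UNIV. f p * prob p)"

definition uni_prob :: "'a::finite \<Rightarrow> real" where
  "uni_prob p = 1 / real (card (UNIV :: 'a set))"

definition chain_prob :: "nat \<Rightarrow> 'a::{finite,order} \<Rightarrow> real" where
  "chain_prob k p = real (card {c \<in> chains k. p \<in> set c})
      / (real (k + 1) * real (card (chains k :: 'a list set)))"

definition mchain_prob :: "nat \<Rightarrow> 'a::{finite,order} \<Rightarrow> real" where
  "mchain_prob m p = real (card {c \<in> mchains m. p \<in> set c})
      / (\<Sum>q\<in>(UNIV :: 'a set). real (card {c \<in> mchains m. q \<in> set c}))"

definition mchain_hat_prob :: "nat \<Rightarrow> 'a::{finite,order} \<Rightarrow> real" where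
  "mchain_hat_prob m p = real (card {(c, i). c \<in> mchains m \<and> i \<le> m \<and> c ! i = p})
      / (real (m + 1) * real (card (mchains m :: 'a list set)))"

end

theory Submission imports Defs "HOL-Library.FuncSet" begin

definition MC :: "nat \<Rightarrow> 'a::order list \<Rightarrow> 'a list set" where
  "MC m s = {c. length c = Suc m \<and> sorted_wrt (\<le>) c \<and> remdups c = s}"

lemma finite_len: "finite {c :: 'a::finite list. length c = n}"
  using finite_lists_length_eq[OF finite_UNIV, of n] by simp

lemma finite_MC: "finite (MC m (s::'a::{finite,order} list))"
  unfolding MC_def by (rule finite_subset[OF _ finite_len[of "Suc m"]]) auto

lemma MC_Nil: "MC m [] = {}"
  unfolding MC_def by auto

lemma sorted_hd_le: "sorted_wrt (\<le>) c \<Longrightarrow> y \<in> set c \<Longrightarrow> hd c \<le> (y::'a::order)"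
  by (cases c) auto

lemma MC_Suc:
  assumes s: "sorted_wrt (<) (s::'a::order list)"
  shows "MC (Suc m) s = (\<lambda>c. hd c # c) ` MC m s \<union> (\<lambda>c. hd s # c) ` MC m (tl s)"
proof (intro equalityI subsetI)
  fix c assume "c \<in> MC (Suc m) s"
  then obtain x c0 where c: "c = x # c0" and l: "length c0 = Suc m" and so: "sorted_wrt (\<le>) c0"
     and xle: "\<forall>y\<in>set c0. x \<le> y" and r: "remdups (x # c0) = s"
    unfolding MC_def by (cases c) auto
  show "c \<in> (\<lambda>c. hd c # c) ` MC m s \<union> (\<lambda>c. hd s # c) ` MC m (tl s)"
  proof (cases "x \<in> set c0")
    case True
    have "hd c0 \<in> set c0" using l by (cases c0) auto
    then have "x = hd c0" using True xle sorted_hd_le[OF so True] by (metis order.antisym)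
    then show ?thesis using c l so r True unfolding MC_def by auto
  next
    case False
    then show ?thesis using c l so r unfolding MC_def by auto
  qed
next
  fix c assume "c \<in> (\<lambda>c. hd c # c) ` MC m s \<union> (\<lambda>c. hd s # c) ` MC m (tl s)"
  then show "c \<in> MC (Suc m) s"
  proof
    assume "c \<in> (\<lambda>c. hd c # c) ` MC m s"
    then obtain c0 where c: "c = hd c0 # c0" and "c0 \<in> MC m s" by auto
    then have l: "length c0 = Suc m" and so: "sorted_wrt (\<le>) c0" and r: "remdups c0 = s"
      unfolding MC_def by auto
    have h: "hd c0 \<in> set c0" using l by (cases c0) auto
    show ?thesis using c l so r h sorted_hd_le[OF so] unfolding MC_def by auto
  next
    assume "c \<in> (\<lambda>c. hd s # c) ` MC m (tl s)"
    then obtain c0 where c: "c = hd s # c0" and "c0 \<in> MC m (tl s)" by auto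
    then have l: "length c0 = Suc m" and so: "sorted_wrt (\<le>) c0" and r: "remdups c0 = tl s"
      unfolding MC_def by auto
    have "s \<noteq> []" using r l by auto
    then obtain h t where st: "s = h # t" by (cases s) auto
    have "\<forall>y\<in>set c0. h < y" using s st r by (metis list.sel(3) set_remdups sorted_wrt.simps(2))
    then show ?thesis using c l so r st unfolding MC_def by (auto simp: order.strict_implies_order)
  qed
qed

lemma card_MC:
  assumes "sorted_wrt (<) (s::'a::{finite,order} list)" "s \<noteq> []"
  shows "card (MC m s) = m choose (length s - 1)"
  using assms
proof (induction m arbitrary: s)
  case 0
  show ?case
  proof (cases "length s = 1")
    case True
    then obtain x where "s = [x]" by (metis One_nat_def length_0_conv length_Suc_conv)
    then have "MC 0 s = {[x]}" unfolding MC_def by (auto simp: length_Suc_conv)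
    then show ?thesis using True by simp
  next
    case False
    then have "MC 0 s = {}" unfolding MC_def by (auto simp: length_Suc_conv)
    then show ?thesis using False 0 by (cases s) auto
  qed
next
  case (Suc m)
  have st: "sorted_wrt (<) (tl s)" using Suc.prems by (cases s) auto
  have inj1: "inj_on (\<lambda>c. hd c # c) A" for A :: "'a list set" by (rule inj_onI) auto
  have inj2: "inj_on (\<lambda>c. hd s # c) A" for A :: "'a list set" by (rule inj_onI) auto
  have disj: "(\<lambda>c. hd c # c) ` MC m s \<inter> (\<lambda>c. hd s # c) ` MC m (tl s) = {}"
  proof (rule ccontr)
    assume "\<not> ?thesis"
    then obtain c1 c2 where "c1 \<in> MC m s" "c2 \<in> MC m (tl s)" "hd c1 # c1 = hd s # c2" by blast
    then have e: "c1 = c2" "hd c1 = hd s" and l: "length c1 = Suc m" and r: "remdups c1 = tl s"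
      unfolding MC_def by auto
    have "hd c1 \<in> set c1" using l by (cases c1) auto
    moreover have "hd s \<notin> set (tl s)" using Suc.prems by (cases s) auto
    ultimately show False using e r by (metis set_remdups)
  qed
  have "card (MC (Suc m) s) = card (MC m s) + card (MC m (tl s))"
    unfolding MC_Suc[OF Suc.prems(1)]
    by (subst card_Un_disjoint) (auto simp: finite_MC disj card_image inj1 inj2)
  also have "\<dots> = (m choose (length s - 1)) + (if tl s = [] then 0 else m choose (length s - 2))"
    using Suc.IH[OF Suc.prems] Suc.IH[OF st] by (auto simp: MC_Nil numeral_2_eq_2)
  also have "\<dots> = Suc m choose (length s - 1)"
    using Suc.prems(2) by (cases s; cases "tl s") auto
  finally show ?case .
qed


definition WC :: "nat \<Rightarrow> ('a::{finite,order} \<Rightarrow> real) \<Rightarrow> real" where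
  "WC k g = (\<Sum>c\<in>chains k. \<Sum>p\<in>set c. g p)"

definition WM :: "nat \<Rightarrow> ('a::{finite,order} \<Rightarrow> real) \<Rightarrow> real" where
  "WM m g = (\<Sum>c\<in>mchains m. \<Sum>p\<in>set c. g p)"

lemma finite_chains: "finite (chains k :: 'a::{finite,order} list set)"
  unfolding chains_def by (rule finite_subset[OF _ finite_len[of "Suc k"]]) auto

lemma finite_mchains: "finite (mchains k :: 'a::{finite,order} list set)"
  unfolding mchains_def by (rule finite_subset[OF _ finite_len[of "Suc k"]]) auto

lemma len_remdups_le: "length (remdups xs) \<le> length xs"
  by (simp add: length_remdups_card_conv card_length)

lemma remdups_sorted: "sorted_wrt (\<le>) c \<Longrightarrow> sorted_wrt (<) (remdups (c::'a::order list))"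
  by (induction c) (auto simp: order.strict_iff_order)

lemma WM_decomp: "WM m (g::'a::{finite,order} \<Rightarrow> real) = (\<Sum>k\<le>m. real (m choose k) * WC k g)"
proof -
  define T :: "'a list set" where "T = {s. sorted_wrt (<) s \<and> s \<noteq> [] \<and> length s \<le> Suc m}"
  have fT: "finite T" unfolding T_def
    by (rule finite_subset[OF _ finite_lists_length_le[OF finite_UNIV, of "Suc m"]]) auto
  have img: "remdups ` mchains m \<subseteq> T"
    unfolding T_def mchains_def using remdups_sorted
    apply (auto)
    apply (metis len_remdups_le)
    done
  have "WM m g = (\<Sum>s\<in>T. \<Sum>c\<in>{c \<in> mchains m. remdups c = s}. \<Sum>p\<in>set c. g p)"
    unfolding WM_def by (rule sum.group[OF finite_mchains fT img, symmetric])
  also have "\<dots> = (\<Sum>s\<in>T. real (m choose (length s - 1)) * (\<Sum>p\<in>set s. g p))"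
  proof (rule sum.cong[OF refl])
    fix s assume s: "s \<in> T"
    have e: "{c \<in> mchains m. remdups c = s} = MC m s" unfolding MC_def mchains_def by auto
    have "(\<Sum>c\<in>MC m s. \<Sum>p\<in>set c. g p) = (\<Sum>c\<in>MC m s. \<Sum>p\<in>set s. g p)"
      by (rule sum.cong[OF refl]) (auto simp: MC_def)
    also have "\<dots> = real (card (MC m s)) * (\<Sum>p\<in>set s. g p)" by simp
    finally show "(\<Sum>c\<in>{c \<in> mchains m. remdups c = s}. \<Sum>p\<in>set c. g p)
        = real (m choose (length s - 1)) * (\<Sum>p\<in>set s. g p)"
      using e card_MC[of s m] s unfolding T_def by auto
  qed
  also have "\<dots> = (\<Sum>k\<le>m. \<Sum>s\<in>{s \<in> T. length s - 1 = k}. real (m choose (length s - 1)) * (\<Sum>p\<in>set s. g p))"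
    by (rule sum.group[OF fT finite_atMost, symmetric]) (auto simp: T_def)
  also have "\<dots> = (\<Sum>k\<le>m. real (m choose k) * WC k g)"
  proof (rule sum.cong[OF refl])
    fix k assume k: "k \<in> {..m}"
    have "{s \<in> T. length s - 1 = k} = chains k" using k unfolding T_def chains_def by auto
    then show "(\<Sum>s\<in>{s \<in> T. length s - 1 = k}. real (m choose (length s - 1)) * (\<Sum>p\<in>set s. g p))
        = real (m choose k) * WC k g"
      unfolding WC_def by (simp add: sum_distrib_left chains_def)
  qed
  finally show ?thesis .
qed


lemma per_c:
  fixes c :: "'a::order list" and g :: "'a \<Rightarrow> real"
  assumes so: "sorted_wrt (\<le>) c" and l: "length c = Suc n"
  shows "(\<Sum>i\<le>n. g (c!i)) = (\<Sum>p\<in>set c. g p) + (\<Sum>i\<in>{i. i<n \<and> c!i = c!Suc i}. g (c!i))"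
proof -
  define I1 where "I1 = {i. i \<le> n \<and> (i = n \<or> c!i \<noteq> c!Suc i)}"
  define I2 where "I2 = {i. i<n \<and> c!i = c!Suc i}"
  have un: "{..n} = I1 \<union> I2" and dj: "I1 \<inter> I2 = {}" unfolding I1_def I2_def by auto
  have mono: "i \<le> j \<Longrightarrow> j \<le> n \<Longrightarrow> c!i \<le> c!j" for i j
    using so l by (cases "i = j") (auto simp: sorted_wrt_iff_nth_less)
  have bij: "bij_betw (\<lambda>i. c!i) I1 (set c)"
  proof (rule bij_betw_imageI)
    show "inj_on (\<lambda>i. c!i) I1"
    proof (rule inj_onI)
      have *: "False" if "i \<in> I1" "j \<in> I1" "c!i = c!j" "i < j" for i j
      proof -
        have jn: "j \<le> n" using that unfolding I1_def by auto
        have "c!i \<le> c!Suc i" "c!Suc i \<le> c!j" using that(4) jn mono[of i "Suc i"] mono[of "Suc i" j] by auto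
        then have "c!i = c!Suc i" using that(3) by (metis order.antisym)
        then show False using that unfolding I1_def by auto
      qed
      fix i j assume "i \<in> I1" "j \<in> I1" "c!i = c!j"
      then show "i = j" using *[of i j] *[of j i] by (metis linorder_neqE_nat)
    qed
  next
    show "(\<lambda>i. c!i) ` I1 = set c"
    proof (intro equalityI subsetI)
      fix x assume "x \<in> (\<lambda>i. c!i) ` I1" then show "x \<in> set c" using l unfolding I1_def by auto
    next
      fix x assume "x \<in> set c"
      then obtain j where j: "j \<le> n" "c!j = x" using l by (metis in_set_conv_nth less_Suc_eq_le)
      define S where "S = {i. i \<le> n \<and> c!i = x}"
      have fS: "finite S" unfolding S_def by auto
      have "j \<in> S" using j unfolding S_def by auto
      define i where "i = Max S"
      have iS: "i \<in> S" using fS \<open>j \<in> S\<close> unfolding i_def by (metis Max_in empty_iff)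
      have "i \<in> I1"
      proof (rule ccontr)
        assume "i \<notin> I1"
        then have "Suc i \<in> S" using iS unfolding I1_def S_def by auto
        then have "Suc i \<le> i" using fS unfolding i_def by (simp add: Max_ge)
        then show False by simp
      qed
      then show "x \<in> (\<lambda>i. c!i) ` I1" using iS unfolding S_def by auto
    qed
  qed
  have "(\<Sum>i\<le>n. g (c!i)) = (\<Sum>i\<in>I1. g (c!i)) + (\<Sum>i\<in>I2. g (c!i))"
    unfolding un by (rule sum.union_disjoint) (auto simp: I1_def I2_def dj)
  also have "(\<Sum>i\<in>I1. g (c!i)) = (\<Sum>p\<in>set c. g p)"
    by (rule sum.reindex_bij_betw[OF bij])
  finally show ?thesis unfolding I2_def .
qed


definition HM :: "nat \<Rightarrow> ('a::{finite,order} \<Rightarrow> real) \<Rightarrow> real" where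
  "HM m g = (\<Sum>c\<in>mchains m. \<Sum>i\<le>m. g (c!i))"

lemma L1: "i < length d \<Longrightarrow> take (Suc i) d @ drop i d = take i d @ d!i # d!i # drop (Suc i) d"
  by (simp add: take_Suc_conv_app_nth Cons_nth_drop_Suc)

lemma L2: "Suc i < length c \<Longrightarrow> c = take i c @ c!i # c!Suc i # drop (Suc (Suc i)) c"
  by (metis Cons_nth_drop_Suc Suc_lessD append_take_drop_id)

lemma sorted_dup: "sorted_wrt (\<le>) (A @ (x::'a::order) # x # B) \<longleftrightarrow> sorted_wrt (\<le>) (A @ x # B)"
  by (auto simp: sorted_wrt_append)

lemma adj_sum:
  "(\<Sum>c\<in>mchains (Suc m). \<Sum>i\<in>{i. i < Suc m \<and> c!i = c!Suc i}. g (c!i)) = HM m (g::'a::{finite,order} \<Rightarrow> real)"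
proof -
  define E :: "('a list \<times> nat) set" where "E = (SIGMA c:mchains (Suc m). {i. i < Suc m \<and> c!i = c!Suc i})"
  define F :: "('a list \<times> nat) set" where "F = mchains m \<times> {..m}"
  define \<psi> :: "'a list \<times> nat \<Rightarrow> 'a list \<times> nat" where "\<psi> = (\<lambda>(c,i). (take i c @ drop (Suc i) c, i))"
  define \<phi> :: "'a list \<times> nat \<Rightarrow> 'a list \<times> nat" where "\<phi> = (\<lambda>(d,i). (take (Suc i) d @ drop i d, i))"
  have bij: "bij_betw \<psi> E F"
  proof (rule bij_betwI[where g = \<phi>])
    show "\<psi> \<in> E \<rightarrow> F"
    proof
      fix p assume "p \<in> E"
      then obtain c i where p: "p = (c,i)" and c: "c \<in> mchains (Suc m)" and i: "i < Suc m" "c!i = c!Suc i"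
        unfolding E_def by auto
      have lc: "length c = Suc (Suc m)" and sc: "sorted_wrt (\<le>) c" using c unfolding mchains_def by auto
      have dec: "c = take i c @ c!i # c!i # drop (Suc (Suc i)) c" using L2[of i c] i lc by simp
      have e: "take i c @ drop (Suc i) c = take i c @ c!i # drop (Suc (Suc i)) c"
        using i lc by (simp add: Cons_nth_drop_Suc)
      have "sorted_wrt (\<le>) (take i c @ drop (Suc i) c)"
        unfolding e using sc dec sorted_dup by metis
      then show "\<psi> p \<in> F" using p lc i unfolding \<psi>_def F_def mchains_def by auto
    qed
  next
    show "\<phi> \<in> F \<rightarrow> E"
    proof
      fix p assume "p \<in> F"
      then obtain d i where p: "p = (d,i)" and d: "d \<in> mchains m" and i: "i \<le> m"
        unfolding F_def by auto
      have ld: "length d = Suc m" and sd: "sorted_wrt (\<le>) d" using d unfolding mchains_def by auto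
      have dec: "d = take i d @ d!i # drop (Suc i) d" using i ld by (simp add: id_take_nth_drop)
      have e: "take (Suc i) d @ drop i d = take i d @ d!i # d!i # drop (Suc i) d" using L1[of i d] i ld by simp
      have so: "sorted_wrt (\<le>) (take (Suc i) d @ drop i d)" unfolding e using sd dec sorted_dup by metis
      have l2: "length (take (Suc i) d @ drop i d) = Suc (Suc m)" using i ld by simp
      have "(take (Suc i) d @ drop i d)!i = (take (Suc i) d @ drop i d)!Suc i"
        unfolding e using i ld by (simp add: nth_append)
      then show "\<phi> p \<in> E" using p so l2 i unfolding \<phi>_def E_def mchains_def by auto
    qed
  next
    fix p assume "p \<in> E"
    then obtain c i where p: "p = (c,i)" and c: "c \<in> mchains (Suc m)" and i: "i < Suc m" "c!i = c!Suc i"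
      unfolding E_def by auto
    have lc: "length c = Suc (Suc m)" using c unfolding mchains_def by auto
    have dec: "c = take i c @ c!i # c!i # drop (Suc (Suc i)) c" using L2[of i c] i lc by simp
    have e: "take i c @ drop (Suc i) c = take i c @ c!i # drop (Suc (Suc i)) c"
      using i lc by (simp add: Cons_nth_drop_Suc)
    have "take (Suc i) (take i c @ drop (Suc i) c) @ drop i (take i c @ drop (Suc i) c)
        = take i c @ c!i # c!i # drop (Suc (Suc i)) c"
      unfolding e using i lc by (simp add: take_Suc_conv_app_nth)
    then show "\<phi> (\<psi> p) = p" using dec p unfolding \<phi>_def \<psi>_def by simp
  next
    fix p assume "p \<in> F"
    then obtain d i where p: "p = (d,i)" and d: "d \<in> mchains m" and i: "i \<le> m"
      unfolding F_def by auto
    have ld: "length d = Suc m" using d unfolding mchains_def by auto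
    show "\<psi> (\<phi> p) = p" using p i ld unfolding \<phi>_def \<psi>_def by (simp add: min_def)
  qed
  have "(\<Sum>c\<in>mchains (Suc m). \<Sum>i\<in>{i. i < Suc m \<and> c!i = c!Suc i}. g (c!i)) = (\<Sum>(c,i)\<in>E. g (c!i))"
    unfolding E_def by (rule sum.Sigma) (auto simp: finite_mchains)
  also have "\<dots> = (\<Sum>p\<in>E. (\<lambda>(d,i). g (d!i)) (\<psi> p))"
  proof (rule sum.cong[OF refl])
    fix p assume "p \<in> E"
    then obtain c i where p: "p = (c,i)" and c: "c \<in> mchains (Suc m)" and i: "i < Suc m" "c!i = c!Suc i"
      unfolding E_def by auto
    have lc: "length c = Suc (Suc m)" using c unfolding mchains_def by auto
    have "(take i c @ drop (Suc i) c) ! i = c ! Suc i" using i lc by (simp add: nth_append)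
    then show "(case p of (c,i) \<Rightarrow> g (c!i)) = (\<lambda>(d,i). g (d!i)) (\<psi> p)"
      using p i unfolding \<psi>_def by simp
  qed
  also have "\<dots> = (\<Sum>(d,i)\<in>F. g (d!i))" by (rule sum.reindex_bij_betw[OF bij])
  also have "\<dots> = HM m g" unfolding HM_def F_def
    by (rule sum.Sigma[symmetric]) (auto simp: finite_mchains)
  finally show ?thesis .
qed

lemma HM_Suc: "HM (Suc m) g = WM (Suc m) g + HM m (g::'a::{finite,order} \<Rightarrow> real)"
proof -
  have "HM (Suc m) g = (\<Sum>c\<in>mchains (Suc m). (\<Sum>p\<in>set c. g p) + (\<Sum>i\<in>{i. i < Suc m \<and> c!i = c!Suc i}. g (c!i)))"
    unfolding HM_def by (rule sum.cong[OF refl]) (rule per_c, auto simp: mchains_def)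
  also have "\<dots> = WM (Suc m) g + HM m g"
    by (subst sum.distrib) (simp only: WM_def adj_sum)
  finally show ?thesis .
qed

lemma HM_0: "HM 0 g = WM 0 (g::'a::{finite,order} \<Rightarrow> real)"
  unfolding HM_def WM_def mchains_def
  by (rule sum.cong[OF refl]) (auto simp: length_Suc_conv)


lemma swap_card:
  fixes f :: "'a::finite \<Rightarrow> real"
  assumes "finite S"
  shows "(\<Sum>p\<in>UNIV. f p * real (card {x\<in>S. P x p})) = (\<Sum>x\<in>S. \<Sum>p\<in>{p. P x p}. f p)"
proof -
  have "(\<Sum>p\<in>UNIV. f p * real (card {x\<in>S. P x p})) = (\<Sum>p\<in>UNIV. \<Sum>x\<in>S. if P x p then f p else 0)"
  proof (rule sum.cong[OF refl])
    fix p
    have "(\<Sum>x\<in>S. if P x p then 1 else 0) = real (card {x\<in>S. P x p})"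
      using sum.inter_filter[OF assms, of "\<lambda>_. (1::real)" "\<lambda>x. P x p", symmetric] by simp
    then have "f p * real (card {x\<in>S. P x p}) = f p * (\<Sum>x\<in>S. if P x p then 1 else 0)" by simp
    also have "\<dots> = (\<Sum>x\<in>S. if P x p then f p else 0)"
      unfolding sum_distrib_left by (rule sum.cong) auto
    finally show "f p * real (card {x\<in>S. P x p}) = (\<Sum>x\<in>S. if P x p then f p else 0)" .
  qed
  also have "\<dots> = (\<Sum>x\<in>S. \<Sum>p\<in>UNIV. if P x p then f p else 0)" by (rule sum.swap)
  also have "\<dots> = (\<Sum>x\<in>S. \<Sum>p\<in>{p. P x p}. f p)"
    by (rule sum.cong[OF refl]) (simp add: sum.inter_filter[symmetric])
  finally show ?thesis .
qed

lemma expect_chain: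
  "expect (chain_prob k :: 'a::{finite,order} \<Rightarrow> real) f = WC k f / (real (k+1) * real (card (chains k :: 'a list set)))"
proof -
  have "expect (chain_prob k :: 'a \<Rightarrow> real) f
     = (\<Sum>p\<in>UNIV. f p * real (card {c\<in>chains k. p \<in> set c})) / (real (k+1) * real (card (chains k :: 'a list set)))"
    unfolding expect_def chain_prob_def by (simp add: sum_divide_distrib)
  also have "(\<Sum>p\<in>UNIV. f p * real (card {c\<in>chains k. p \<in> set c})) = WC k f"
    unfolding WC_def by (subst swap_card[OF finite_chains]) simp
  finally show ?thesis .
qed

lemma expect_mchain:
  "expect (mchain_prob m :: 'a::{finite,order} \<Rightarrow> real) f = WM m f / WM m (\<lambda>_::'a. 1)"
proof -
  have Z: "(\<Sum>q\<in>(UNIV :: 'a set). real (card {c \<in> mchains m. q \<in> set c})) = WM m (\<lambda>_::'a. 1)"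
    using swap_card[OF finite_mchains, where f="\<lambda>_. 1" and P="\<lambda>c (q::'a). q \<in> set c"] unfolding WM_def by simp
  have "expect (mchain_prob m :: 'a \<Rightarrow> real) f
     = (\<Sum>p\<in>UNIV. f p * real (card {c\<in>mchains m. p \<in> set c})) / WM m (\<lambda>_::'a. 1)"
    unfolding expect_def mchain_prob_def Z by (simp add: sum_divide_distrib)
  also have "(\<Sum>p\<in>UNIV. f p * real (card {c\<in>mchains m. p \<in> set c})) = WM m f"
    unfolding WM_def by (subst swap_card[OF finite_mchains]) simp
  finally show ?thesis .
qed

lemma expect_hat:
  "expect (mchain_hat_prob m :: 'a::{finite,order} \<Rightarrow> real) f = HM m f / (real (m+1) * real (card (mchains m :: 'a list set)))"
proof -
  have e: "{(c, i). c \<in> mchains m \<and> i \<le> m \<and> c ! i = p} = {x \<in> mchains m \<times> {..m}. (\<lambda>x p. fst x ! snd x = p) x p}"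
    for p :: 'a by auto
  have "expect (mchain_hat_prob m :: 'a \<Rightarrow> real) f
     = (\<Sum>p\<in>UNIV. f p * real (card {x \<in> mchains m \<times> {..m}. (\<lambda>x p. fst x ! snd x = p) x p}))
        / (real (m+1) * real (card (mchains m :: 'a list set)))"
    unfolding expect_def mchain_hat_prob_def e by (simp add: sum_divide_distrib)
  also have "(\<Sum>p\<in>UNIV. f p * real (card {x \<in> mchains m \<times> {..m}. (\<lambda>x p. fst x ! snd x = p) x p})) = HM m f"
    unfolding HM_def by (subst swap_card) (auto simp: finite_mchains sum.cartesian_product split_def)
  finally show ?thesis .
qed

lemma abstract:
  fixes A B H :: "nat \<Rightarrow> real"
  assumes Az: "\<forall>k>r. A k = 0" and Bd: "\<forall>m. B m = (\<Sum>k\<le>m. real (m choose k) * A k)"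
    and H0: "H 0 = B 0" and HS: "\<forall>m. H (Suc m) = B (Suc m) + H m"
  shows "((\<forall>k\<le>r. A k = 0) \<longleftrightarrow> (\<forall>m. B m = 0)) \<and> ((\<forall>k\<le>r. A k = 0) \<longleftrightarrow> (\<forall>m\<le>r. B m = 0))
    \<and> ((\<forall>k\<le>r. A k = 0) \<longleftrightarrow> (\<forall>m. H m = 0)) \<and> ((\<forall>k\<le>r. A k = 0) \<longleftrightarrow> (\<forall>m\<le>r. H m = 0))"
proof -
  have Bsplit: "B m = A m + (\<Sum>k<m. real (m choose k) * A k)" for m
    using Bd by (simp add: lessThan_Suc_atMost[symmetric])
  have AB: "\<forall>k. A k = 0" if "\<forall>k\<le>r. A k = 0" using that Az by (meson not_le)
  have BA: "\<forall>k\<le>r. A k = 0" if "\<forall>m\<le>r. B m = 0"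
  proof -
    have "m \<le> r \<longrightarrow> A m = 0" for m
    proof (induction m rule: less_induct)
      case (less m)
      show ?case
      proof
        assume "m \<le> r"
        then have "\<forall>k<m. A k = 0" using less by auto
        then have "B m = A m" using Bsplit[of m] by simp
        then show "A m = 0" using that \<open>m \<le> r\<close> by simp
      qed
    qed
    then show ?thesis by auto
  qed
  have BH: "\<forall>m. H m = 0" if "\<forall>m. B m = 0"
  proof
    fix m show "H m = 0" by (induction m) (use that H0 HS in auto)
  qed
  have HB: "\<forall>m\<le>r. B m = 0" if "\<forall>m\<le>r. H m = 0"
  proof (intro allI impI)
    fix m assume "m \<le> r"
    then show "B m = 0"
    proof (cases m)
      case 0 then show ?thesis using that H0 by auto
    next
      case (Suc n)
      have "H (Suc n) = 0" "H n = 0" using that \<open>m \<le> r\<close> Suc by auto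
      then show ?thesis using HS Suc by auto
    qed
  qed
  have AllB: "\<forall>m. B m = 0" if "\<forall>k. A k = 0" using Bd that by simp
  show ?thesis using AB BA BH HB AllB by blast
qed


lemma sorted_less_distinct: "sorted_wrt (<) c \<Longrightarrow> distinct (c::'a::order list)"
  by (induction c) auto

lemma WC_one: "WC k (\<lambda>_::'a::{finite,order}. 1) = real (k+1) * real (card (chains k :: 'a list set))"
proof -
  have "WC k (\<lambda>_::'a. 1) = (\<Sum>c\<in>(chains k :: 'a list set). real (k+1))"
    unfolding WC_def by (rule sum.cong[OF refl]) (auto simp: chains_def distinct_card sorted_less_distinct)
  then show ?thesis by simp
qed

lemma HM_one: "HM m (\<lambda>_::'a::{finite,order}. 1) = real (m+1) * real (card (mchains m :: 'a list set))"
  unfolding HM_def by simp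

lemma lin_WC: "WC k (\<lambda>p. (f::'a::{finite,order} \<Rightarrow> real) p - u) = WC k f - u * WC k (\<lambda>_::'a::{finite,order}. 1)"
  unfolding WC_def by (simp add: sum_subtractf sum_distrib_left mult.commute)
lemma lin_WM: "WM k (\<lambda>p. (f::'a::{finite,order} \<Rightarrow> real) p - u) = WM k f - u * WM k (\<lambda>_::'a::{finite,order}. 1)"
  unfolding WM_def by (simp add: sum_subtractf sum_distrib_left mult.commute)
lemma lin_HM: "HM k (\<lambda>p. (f::'a::{finite,order} \<Rightarrow> real) p - u) = HM k f - u * HM k (\<lambda>_::'a::{finite,order}. 1)"
  unfolding HM_def by (simp add: sum_subtractf sum_distrib_left mult.commute)

lemma div_eq_iff: "(D::real) > 0 \<Longrightarrow> (x / D = U) \<longleftrightarrow> (x - U * D = 0)"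
  by (auto simp: field_simps)

lemma longest_facts:
  fixes r :: nat
  assumes "r = longest_chain_length TYPE('a::{finite,order})"
  shows "k \<le> r \<Longrightarrow> (chains k :: 'a list set) \<noteq> {}" and "r < k \<Longrightarrow> (chains k :: 'a list set) = {}"
proof -
  define K where "K = {k. (chains k :: 'a list set) \<noteq> {}}"
  have fK: "finite K"
  proof (rule finite_subset[of _ "{..card (UNIV::'a set)}"])
    show "K \<subseteq> {..card (UNIV::'a set)}"
    proof
      fix k assume "k \<in> K"
      then obtain c :: "'a list" where c: "c \<in> chains k" unfolding K_def by auto
      then have "distinct c" "length c = Suc k" unfolding chains_def by (auto simp: sorted_less_distinct)
      then have "Suc k = card (set c)" by (simp add: distinct_card)
      also have "\<dots> \<le> card (UNIV :: 'a set)" by (rule card_mono) auto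
      finally show "k \<in> {..card (UNIV::'a set)}" by simp
    qed
  qed simp
  have "[undefined] \<in> (chains 0 :: 'a list set)" unfolding chains_def by simp
  then have "0 \<in> K" unfolding K_def by auto
  have rK: "r = Max K" using assms unfolding longest_chain_length_def K_def by simp
  have "r \<in> K" unfolding rK using fK \<open>0 \<in> K\<close> by (metis Max_in empty_iff)
  then obtain c :: "'a list" where c: "c \<in> chains r" unfolding K_def by auto
  show "(chains k :: 'a list set) \<noteq> {}" if "k \<le> r"
  proof -
    have "take (Suc k) c \<in> chains k" using c that unfolding chains_def by auto
    then show ?thesis by auto
  qed
  show "(chains k :: 'a list set) = {}" if "r < k"
  proof (rule ccontr)
    assume "(chains k :: 'a list set) \<noteq> {}"
    then have "k \<in> K" unfolding K_def by auto
    then have "k \<le> r" unfolding rK using fK by simp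
    then show False using that by simp
  qed
qed

lemma sorted_rep: "sorted_wrt (\<le>) (replicate n (x::'a::order))"
  by (induction n) auto

lemma mchains_ne: "(mchains m :: 'a::{finite,order} list set) \<noteq> {}"
proof -
  have "replicate (Suc m) undefined \<in> (mchains m :: 'a list set)"
    unfolding mchains_def by (auto simp: sorted_rep)
  then show ?thesis by auto
qed

lemma WM_one_pos: "WM m (\<lambda>_::'a::{finite,order}. 1) > 0"
proof -
  obtain c :: "'a list" where c: "c \<in> mchains m" using mchains_ne by blast
  have "c \<noteq> []" using c unfolding mchains_def by auto
  then show ?thesis unfolding WM_def
    by (intro sum_pos2[OF finite_mchains c]) (auto simp: card_gt_0_iff)
qed

theorem proposition2p4:
  fixes r :: nat
  assumes "r = longest_chain_length TYPE('a::{finite,order})"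
  defines "U \<equiv> expect (uni_prob :: 'a \<Rightarrow> real) (\<lambda>p. real (ddeg p))"
  shows
    "((\<forall>k\<le>r. expect ((chain_prob k) :: 'a \<Rightarrow> real) (\<lambda>p. real (ddeg p)) = U)
       \<longleftrightarrow> (\<forall>m. expect ((mchain_prob m) :: 'a \<Rightarrow> real) (\<lambda>p. real (ddeg p)) = U))
   \<and> ((\<forall>k\<le>r. expect ((chain_prob k) :: 'a \<Rightarrow> real) (\<lambda>p. real (ddeg p)) = U)
       \<longleftrightarrow> (\<forall>m\<le>r. expect ((mchain_prob m) :: 'a \<Rightarrow> real) (\<lambda>p. real (ddeg p)) = U))
   \<and> ((\<forall>k\<le>r. expect ((chain_prob k) :: 'a \<Rightarrow> real) (\<lambda>p. real (ddeg p)) = U)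
       \<longleftrightarrow> (\<forall>m. expect ((mchain_hat_prob m) :: 'a \<Rightarrow> real) (\<lambda>p. real (ddeg p)) = U))
   \<and> ((\<forall>k\<le>r. expect ((chain_prob k) :: 'a \<Rightarrow> real) (\<lambda>p. real (ddeg p)) = U)
       \<longleftrightarrow> (\<forall>m\<le>r. expect ((mchain_hat_prob m) :: 'a \<Rightarrow> real) (\<lambda>p. real (ddeg p)) = U))"
proof -
  define f :: "'a \<Rightarrow> real" where "f = (\<lambda>p. real (ddeg p))"
  define g :: "'a \<Rightarrow> real" where "g = (\<lambda>p. f p - U)"
  define A where "A = (\<lambda>k. WC k g)"
  define B where "B = (\<lambda>m. WM m g)"
  define H where "H = (\<lambda>m. HM m g)"
  have eq1: "(\<forall>k\<le>r. expect ((chain_prob k) :: 'a \<Rightarrow> real) f = U) \<longleftrightarrow> (\<forall>k\<le>r. A k = 0)"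
  proof -
    have "expect ((chain_prob k) :: 'a \<Rightarrow> real) f = U \<longleftrightarrow> A k = 0" if "k \<le> r" for k
    proof -
      have "card (chains k :: 'a list set) > 0"
        using longest_facts(1)[OF assms(1) that] finite_chains by (auto simp: card_gt_0_iff)
      then have D: "real (k+1) * real (card (chains k :: 'a list set)) > 0" by simp
      show ?thesis unfolding expect_chain div_eq_iff[OF D] A_def g_def lin_WC WC_one by simp
    qed
    then show ?thesis by auto
  qed
  have eq2: "expect ((mchain_prob m) :: 'a \<Rightarrow> real) f = U \<longleftrightarrow> B m = 0" for m
    unfolding expect_mchain div_eq_iff[OF WM_one_pos] B_def g_def lin_WM by simp
  have eq3: "expect ((mchain_hat_prob m) :: 'a \<Rightarrow> real) f = U \<longleftrightarrow> H m = 0" for m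
  proof -
    have "card (mchains m :: 'a list set) > 0"
      using mchains_ne finite_mchains by (auto simp: card_gt_0_iff)
    then have D: "real (m+1) * real (card (mchains m :: 'a list set)) > 0" by simp
    show ?thesis unfolding expect_hat div_eq_iff[OF D] H_def g_def lin_HM HM_one by simp
  qed
  have Az: "\<forall>k>r. A k = 0" unfolding A_def WC_def using longest_facts(2)[OF assms(1)] by simp
  have Bd: "\<forall>m. B m = (\<Sum>k\<le>m. real (m choose k) * A k)" unfolding A_def B_def by (simp add: WM_decomp)
  have H0: "H 0 = B 0" unfolding H_def B_def by (rule HM_0)
  have HS: "\<forall>m. H (Suc m) = B (Suc m) + H m" unfolding H_def B_def by (simp add: HM_Suc)
  show ?thesis
    unfolding f_def[symmetric] eq1 eq2 eq3 using abstract[OF Az Bd H0 HS] by blast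
qed

end
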